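(* Let $N\in\mathbb{N}$ with $N\ge3$, $s\in\mathbb{N}$, and $n\in\mathbb{N}$ with $n\ge4s^2$. Then there is a real $E$ with $|E|\le 1.5\,s^{\frac{N+3}{2}}\cosh\left(2\pi\sqrt{\frac s3}\right)n^{-\frac{N+2}{2}}$ such that \[ e^{2\pi\sqrt{\frac{n+s}{3}}}=e^{2\pi\sqrt{\frac n3}}\left(\sum_{m=0}^{N+1}\frac{d^{[1]}_s(m)}{n^{\frac m2}}+E\right). \]
   Context: For $m\in\mathbb{N}_0$: $e^{[1]}_s(0):=1$, $e^{[1]}_s(m):=\frac{s^m(2m-1)!}{(-4)^m}\sum_{\nu=1}^{m}\frac{(-4\pi^2s/3)^\nu}{(2\nu-1)!(\nu+m)!(m-\nu)!}$ for $m\ge1$; $o^{[1]}_s(m):=\frac{\pi s^{m+1}(2m)!}{\sqrt3(-4)^m}\sum_{\nu=0}^{m}\frac{(-4\pi^2s/3)^\nu}{(2\nu)!(m-\nu)!(\nu+m+1)!}$; $d^{[1]}_s(2m):=e^{[1]}_s(m)$, $d^{[1]}_s(2m+1):=o^{[1]}_s(m)$. *)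

theory Defs
  imports "HOL-Analysis.Analysis"
begin

definition e1 :: "nat \<Rightarrow> nat \<Rightarrow> real" where
  "e1 s m = (if m = 0 then 1 else
     (real s ^ m * fact (2*m - 1) / (-4) ^ m) *
     (\<Sum>\<nu>=1..m. (-4 * pi^2 * real s / 3) ^ \<nu> /
        (fact (2*\<nu> - 1) * fact (\<nu> + m) * fact (m - \<nu>))))"

definition o1 :: "nat \<Rightarrow> nat \<Rightarrow> real" where
  "o1 s m = (pi * real s ^ (m+1) * fact (2*m) / (sqrt 3 * (-4) ^ m)) *
     (\<Sum>\<nu>=0..m. (-4 * pi^2 * real s / 3) ^ \<nu> /
        (fact (2*\<nu>) * fact (m - \<nu>) * fact (\<nu> + m + 1)))"

definition d1 :: "nat \<Rightarrow> nat \<Rightarrow> real" where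
  "d1 s m = (if even m then e1 s (m div 2) else o1 s (m div 2))"

end

theory Submission
  imports Defs
begin


definition ca :: "nat \<Rightarrow> nat \<Rightarrow> real" where
  "ca k j = (if k = 0 then (if j = 0 then 1 else 0)
             else real k / real (k + 2*j) * real ((k + 2*j) choose j))"

definition tc :: "nat \<Rightarrow> nat \<Rightarrow> real" where
  "tc k j = (-1)^j * ca k j / 2^(k + 2*j)"

lemma ca_0 [simp]: "ca k 0 = 1"
  by (simp add: ca_def)

lemma ca_alt: "k + 2*j > 0 \<Longrightarrow> ca k j = real k / real (k + 2*j) * real ((k + 2*j) choose j)"
  by (auto simp: ca_def)

lemma alg_ca: fixes k j L D B2 :: real
  assumes "L > 0" "D > 0" "k*D + (k+2)*(j+1) = (k+1)*L"
  shows "k/L*B2 + (k+2)/L*((j+1)*B2/D) = B2*(k+1)/D"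
proof -
  have "k/L*B2 + (k+2)/L*((j+1)*B2/D) = B2*(k*D + (k+2)*(j+1))/(L*D)"
    using assms(1,2) by (simp add: field_simps)
  also have "\<dots> = B2*(k+1)/D" using assms by (simp add: field_simps)
  finally show ?thesis .
qed

lemma ca_rec: "ca (Suc k) (Suc j) = ca k (Suc j) + ca (k+2) j"
proof -
  define L where "L = k + 2*j + 2"
  have L0: "L > 0" by (simp add: L_def)
  have e1: "ca k (Suc j) = real k / real L * real (L choose Suc j)"
    by (subst ca_alt) (auto simp: L_def)
  have e2: "ca (k+2) j = real (k+2) / real L * real (L choose j)"
    by (subst ca_alt) (auto simp: L_def)
  have e3: "ca (Suc k) (Suc j) = real (k+1) / real (L+1) * real ((L+1) choose Suc j)"
    by (subst ca_alt) (auto simp: L_def)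
  have r1: "real (Suc j) * real (L choose Suc j) = real (k+j+2) * real (L choose j)"
  proof -
    have "Suc j * (L choose Suc j) = (L - j) * (L choose j)"
      using binomial_Suc_Suc_eq_times choose_mult_lemma 
      by (metis add_diff_cancel_left' binomial_absorb_comp binomial_absorption)
    moreover have "L - j = k + j + 2" by (simp add: L_def)
    ultimately show ?thesis by (metis of_nat_mult)
  qed
  have r2: "real (k+j+2) * real ((L+1) choose Suc j) = real (L+1) * real (L choose Suc j)"
  proof -
    have "(L + 1 - Suc j) * ((L+1) choose Suc j) = (L+1) * (L choose Suc j)"
      using binomial_absorb_comp[of "L+1" "Suc j"] by simp
    moreover have "L + 1 - Suc j = k + j + 2" by (simp add: L_def)
    ultimately show ?thesis by (metis of_nat_mult)
  qed
  define B1 where "B1 = real (L choose j)"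
  define B2 where "B2 = real (L choose Suc j)"
  define B3 where "B3 = real ((L+1) choose Suc j)"
  have r1': "(real j + 1) * B2 = (real k + real j + 2) * B1" using r1 by (auto simp add: B1_def B2_def algebra_simps)
  have r2': "(real k + real j + 2) * B3 = (real L + 1) * B2" using r2 by (auto simp add: B3_def B2_def algebra_simps)
  have Lr: "real L = real k + 2 * real j + 2" by (simp add: L_def)
  have "real k / real L * B2 + real (k+2) / real L * B1 = real (k+1) / real (L+1) * B3"
  proof -
    have pos: "real k + real j + 2 > 0" by simp
    have b1: "B1 = (real j + 1) * B2 / (real k + real j + 2)" using r1' pos by (simp add: field_simps)
    have b3: "B3 = (real L + 1) * B2 / (real k + real j + 2)" using r2' pos by (simp add: field_simps)
    have key: "real k * (real k + real j + 2) + (real k + 2) * (real j + 1) = (real k + 1) * real L"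
      unfolding Lr by (simp add: algebra_simps)
    have "real k / real L * B2 + real (k+2) / real L * B1 = B2 * (real k + 1) / (real k + real j + 2)"
      unfolding b1 using alg_ca[OF _ pos key[folded Lr], of B2] L0 by (simp add: add.commute)
    also have "\<dots> = real (k+1) / real (L+1) * B3"
    proof -
      have "real (L+1) \<noteq> 0" by simp
      then show ?thesis unfolding b3 using pos
        by (metis (no_types, lifting) of_nat_1 of_nat_add mult.commute nonzero_mult_div_cancel_left times_divide_eq_left times_divide_eq_right)
    qed
    finally show ?thesis .
  qed
  then show ?thesis using e1 e2 e3 by (simp add: B1_def B2_def B3_def)
qed

lemma ca_nonneg: "ca k j \<ge> 0" by (simp add: ca_def)

lemma ca_le: "k + 2*j > 0 \<Longrightarrow> 2 * ca k j \<le> 2^(k + 2*j)"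
proof (cases "k = 0")
  case True
  assume "k + 2*j > 0" then show ?thesis using True by (simp add: ca_def)
next
  case False
  define m where "m = k + 2*j"
  have "ca k j \<le> real (m choose j)"
  proof -
    have "real k / real m \<le> 1" using False by (simp add: m_def)
    have "real k * real (m choose j) \<le> real m * real (m choose j)"
      by (intro mult_right_mono) (auto simp: m_def)
    moreover have "real m > 0" using False by (simp add: m_def)
    ultimately show ?thesis using False by (simp add: ca_def m_def pos_divide_le_eq)
  qed
  moreover have "2 * (m choose j) \<le> 2^m"
  proof -
    have ne: "j \<noteq> m - j" using False by (simp add: m_def)
    have sub: "{j, m - j} \<subseteq> {..m}" by (auto simp: m_def)
    have "(m choose j) + (m choose (m - j)) = (\<Sum>i\<in>{j, m-j}. m choose i)" using ne by simp
    also have "\<dots> \<le> (\<Sum>i\<le>m. m choose i)" by (rule sum_mono2) (use sub in auto)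
    also have "\<dots> = 2^m" by (rule choose_row_sum)
    finally show ?thesis using binomial_symmetric[of j m] by (simp add: m_def)
  qed
  then have "real (2 * (m choose j)) \<le> real (2^m)" by (simp only: of_nat_le_iff)
  ultimately show ?thesis by (simp add: m_def)
qed


lemma tc_abs_le1: "\<bar>tc k j\<bar> \<le> 1"
proof (cases "k + 2*j = 0")
  case True then show ?thesis by (simp add: tc_def ca_def)
next
  case False
  then have "2 * ca k j \<le> 2^(k+2*j)" using ca_le by simp
  then show ?thesis using ca_nonneg[of k j] by (simp add: tc_def abs_mult)
qed

lemma tc_abs_half: "k + 2*j > 0 \<Longrightarrow> \<bar>tc k j\<bar> \<le> 1/2"
proof -
  assume "k + 2*j > 0"
  then have "2 * ca k j \<le> 2^(k+2*j)" using ca_le by simp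
  then show ?thesis using ca_nonneg[of k j] by (simp add: tc_def abs_mult field_simps)
qed

lemma tc_rec0: "tc k 0 = 2 * tc (Suc k) 0"
  by (simp add: tc_def)

lemma tc_rec: "tc k (Suc j) - tc (k+2) j = 2 * tc (Suc k) (Suc j)"
proof -
  have "tc k (Suc j) - tc (k+2) j = (-1)^(Suc j) * (ca k (Suc j) + ca (k+2) j) / 2^(k + 2*Suc j)"
    by (simp add: tc_def field_simps)
  also have "\<dots> = (-1)^(Suc j) * ca (Suc k) (Suc j) / 2^(k + 2*Suc j)"
    by (simp add: ca_rec)
  also have "\<dots> = 2 * tc (Suc k) (Suc j)"
    by (simp add: tc_def field_simps)
  finally show ?thesis .
qed

definition G :: "nat \<Rightarrow> real \<Rightarrow> real" where
  "G k X = (\<Sum>j. tc k j * X^(k + 2*j))"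

lemma G_summable: "\<bar>X\<bar> < 1 \<Longrightarrow> summable (\<lambda>j. tc k j * X^(k + 2*j))"
proof (rule summable_comparison_test)
  assume X: "\<bar>X\<bar> < 1"
  show "\<exists>N. \<forall>n\<ge>N. norm (tc k n * X ^ (k + 2 * n)) \<le> \<bar>X\<bar>^n"
  proof (intro exI allI impI)
    fix n :: nat
    have "norm (tc k n * X ^ (k + 2 * n)) = \<bar>tc k n\<bar> * \<bar>X\<bar>^(k+2*n)"
      by (simp add: abs_mult power_abs)
    also have "\<dots> \<le> 1 * \<bar>X\<bar>^(k+2*n)"
      by (intro mult_right_mono tc_abs_le1) simp
    also have "\<dots> \<le> \<bar>X\<bar>^n"
      using X by (simp add: power_decreasing)
    finally show "norm (tc k n * X ^ (k + 2 * n)) \<le> \<bar>X\<bar>^n" .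
  qed
  show "summable (\<lambda>n. \<bar>X\<bar>^n)" using X by (simp add: summable_geometric)
qed

lemma G_sums: "\<bar>X\<bar> < 1 \<Longrightarrow> (\<lambda>j. tc k j * X^(k + 2*j)) sums G k X"
  unfolding G_def by (rule summable_sums) (rule G_summable)

lemma G_rec:
  assumes X: "\<bar>X\<bar> < 1" "X \<noteq> 0"
  shows "G k X - G (k+2) X = 2 / X * G (Suc k) X"
proof -
  define f where "f j = (if j = 0 then 0 else tc (k+2) (j-1) * X^(k + 2*j))" for j
  have "(\<lambda>j. f (Suc j)) sums G (k+2) X"
  proof -
    have "(\<lambda>j. f (Suc j)) = (\<lambda>j. tc (k+2) j * X^((k+2) + 2*j))"
      by (auto simp: f_def algebra_simps)
    then show ?thesis using G_sums[OF X(1), of "k+2"] by simp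
  qed
  then have "f sums (G (k+2) X + f 0)" by (simp only: sums_Suc_iff)
  then have f: "f sums G (k+2) X" by (simp add: f_def)
  have "(\<lambda>j. tc k j * X^(k + 2*j) - f j) sums (G k X - G (k+2) X)"
    by (rule sums_diff[OF G_sums[OF X(1)] f])
  moreover have "(\<lambda>j. tc k j * X^(k + 2*j) - f j) = (\<lambda>j. 2 / X * (tc (Suc k) j * X^(Suc k + 2*j)))"
  proof
    fix j show "tc k j * X^(k + 2*j) - f j = 2 / X * (tc (Suc k) j * X^(Suc k + 2*j))"
    proof (cases j)
      case 0 then show ?thesis using X by (simp add: f_def tc_def)
    next
      case (Suc i)
      have "tc k j * X^(k + 2*j) - f j = (tc k (Suc i) - tc (k+2) i) * X^(k + 2*j)"
        by (simp add: f_def Suc algebra_simps)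
      also have "\<dots> = 2 * tc (Suc k) (Suc i) * X^(k + 2*j)" by (simp only: tc_rec)
      also have "\<dots> = 2 / X * (tc (Suc k) j * X^(Suc k + 2*j))"
        using X by (simp add: Suc)
      finally show ?thesis .
    qed
  qed
  ultimately have "(\<lambda>j. 2 / X * (tc (Suc k) j * X^(Suc k + 2*j))) sums (G k X - G (k+2) X)" by simp
  moreover have "(\<lambda>j. 2 / X * (tc (Suc k) j * X^(Suc k + 2*j))) sums (2 / X * G (Suc k) X)"
    by (rule sums_mult[OF G_sums[OF X(1)]])
  ultimately show ?thesis by (rule sums_unique2)
qed

lemma G0: "\<bar>X\<bar> < 1 \<Longrightarrow> G 0 X = 1"
proof -
  assume X: "\<bar>X\<bar> < 1"
  have "(\<lambda>j. tc 0 j * X^(0 + 2*j)) = (\<lambda>j. if j = 0 then (\<lambda>_. 1::real) j else 0)"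
    by (auto simp: tc_def ca_def)
  then have "(\<lambda>j. tc 0 j * X^(0 + 2*j)) sums 1" using sums_single[of 0 "\<lambda>_. 1::real"] by simp
  then show ?thesis using G_sums[OF X, of 0] sums_unique2 by blast
qed

lemma alg_half: fixes y z A D F s :: real
  assumes "y > 0" "z > 0" "A > 0" "D > 0"
  shows "s * F / (A * (y * A) * D) * (1/2 - y) / z =
     (-s) * ((2*y)*(2*y-1)*F) / ((y*A) * (z*(y*A)) * (4*D))"
  using assms by (simp add: field_simps)

lemma half_gchoose: "((1/2::real) gchoose Suc j) = (-1)^j * fact (2*j) / (fact j * fact (Suc j) * 2^(2*j+1))"
proof (induction j)
  case 0 then show ?case by simp
next
  case (Suc j)
  have step: "((1/2::real) gchoose Suc (Suc j)) = ((1/2::real) gchoose Suc j) * (1/2 - real (Suc j)) / real (Suc (Suc j))"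
  proof -
    have "fact (Suc (Suc j)) * ((1/2::real) gchoose Suc (Suc j)) = (\<Prod>i = 0..<Suc (Suc j). 1/2 - of_nat i)"
      by (rule gbinomial_mult_fact)
    also have "\<dots> = (\<Prod>i = 0..<Suc j. 1/2 - of_nat i) * (1/2 - real (Suc j))"
      by simp
    also have "(\<Prod>i = 0..<Suc j. 1/2 - of_nat i) = fact (Suc j) * ((1/2::real) gchoose Suc j)"
      by (rule gbinomial_mult_fact[symmetric])
    finally have "fact (Suc (Suc j)) * ((1/2::real) gchoose Suc (Suc j)) = fact (Suc j) * ((1/2::real) gchoose Suc j) * (1/2 - real (Suc j))" .
    then have "fact (Suc j) * (real (Suc (Suc j)) * ((1/2::real) gchoose Suc (Suc j))) = fact (Suc j) * (((1/2::real) gchoose Suc j) * (1/2 - real (Suc j)))"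
      by (simp only: fact_Suc[of "Suc j"] of_nat_mult ac_simps)
    then have "real (Suc (Suc j)) * ((1/2::real) gchoose Suc (Suc j)) = ((1/2::real) gchoose Suc j) * (1/2 - real (Suc j))"
      by (simp only: mult_left_cancel fact_nonzero not_False_eq_True simp_thms)
    then show ?thesis by (simp add: field_simps del: of_nat_Suc)
  qed
  have f1: "(fact (2 * Suc j)::real) = (2 * real (Suc j)) * (2 * real (Suc j) - 1) * fact (2*j)"
  proof -
    have "2 * Suc j = Suc (Suc (2*j))" by simp
    then have "(fact (2 * Suc j)::real) = real (Suc (Suc (2*j))) * (real (Suc (2*j)) * fact (2*j))"
      by (simp only: fact_Suc of_nat_mult)
    then show ?thesis by (simp add: algebra_simps)
  qed
  have f2: "(fact (Suc (Suc j))::real) = real (Suc (Suc j)) * (real (Suc j) * fact j)"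
    by (simp only: fact_Suc of_nat_mult)
  have f3: "(fact (Suc j)::real) = real (Suc j) * fact j" by (simp only: fact_Suc of_nat_mult)
  have f4: "(2::real)^(2 * Suc j + 1) = 4 * 2^(2*j+1)" by simp
  have f5: "(-1::real)^(Suc j) = - ((-1)^j)" by simp
  show ?case unfolding step Suc.IH f1 f2 f3 f4 f5
    by (rule alg_half) auto
qed


lemma tc1: "tc 1 j = ((1/2::real) gchoose Suc j)"
proof -
  have "real ((1 + 2*j) choose j) = fact (1 + 2*j) / (fact j * fact (1 + 2*j - j))"
    by (rule binomial_fact) simp
  also have "1 + 2*j - j = Suc j" by simp
  also have "(fact (1 + 2*j)::real) = real (1 + 2*j) * fact (2*j)"
    by (metis fact_Suc plus_1_eq_Suc of_nat_mult)
  finally have b: "real ((1 + 2*j) choose j) = real (1 + 2*j) * fact (2*j) / (fact j * fact (Suc j))" .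
  have "ca 1 j = fact (2*j) / (fact j * fact (Suc j))"
    unfolding ca_def using b by (simp del: of_nat_Suc of_nat_add)
  then show ?thesis unfolding half_gchoose tc_def by (simp add: field_simps)
qed

definition gfun :: "real \<Rightarrow> real" where
  "gfun X = (sqrt (1 + X^2) - 1) / X"

lemma G1:
  assumes X: "\<bar>X\<bar> < 1" "X \<noteq> 0"
  shows "G 1 X = gfun X"
proof -
  have "\<bar>X^2\<bar> < 1" using X by (simp add: abs_square_less_1)
  from sqrt_series[OF this] have "(\<lambda>n. ((1/2) gchoose n) * (X^2) ^ n) sums (sqrt (1 + X^2) - 1 + 1)"
    by simp
  then have "(\<lambda>n. ((1/2) gchoose Suc n) * (X^2) ^ Suc n) sums (sqrt (1 + X^2) - 1)"
    by (subst sums_Suc_iff) simp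
  then have "(\<lambda>n. ((1/2) gchoose Suc n) * (X^2) ^ Suc n / X) sums gfun X"
    unfolding gfun_def by (rule sums_divide)
  moreover have "(\<lambda>n. ((1/2) gchoose Suc n) * (X^2) ^ Suc n / X) = (\<lambda>n. tc 1 n * X^(1 + 2*n))"
  proof
    fix n
    have pw: "(X^2) ^ Suc n = X * X^(1 + 2*n)" unfolding power_mult[symmetric] by simp
    show "((1/2) gchoose Suc n) * (X^2) ^ Suc n / X = tc 1 n * X^(1 + 2*n)"
      unfolding tc1 pw using X by simp
  qed
  ultimately have "(\<lambda>n. tc 1 n * X^(1 + 2*n)) sums gfun X" by simp
  then show ?thesis using G_sums[OF X(1), of 1] sums_unique2 by blast
qed

lemma gfun_eq: "X \<noteq> 0 \<Longrightarrow> 1 - 2 / X * gfun X = (gfun X)^2"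
proof -
  assume X: "X \<noteq> 0"
  define w where "w = sqrt (1 + X^2)"
  have w2: "w^2 = 1 + X^2" unfolding w_def by simp
  have "(gfun X)^2 + 2 / X * gfun X - 1 = (w^2 - 1 - X^2) / X^2"
    unfolding gfun_def w_def[symmetric] using X by (simp add: field_simps power2_eq_square)
  also have "\<dots> = 0" using w2 by simp
  finally show ?thesis by simp
qed

lemma G_pow:
  assumes X: "\<bar>X\<bar> < 1" "X \<noteq> 0"
  shows "G k X = (gfun X)^k"
proof -
  have "G k X = (gfun X)^k \<and> G (Suc k) X = (gfun X)^(Suc k)"
  proof (induction k)
    case 0 then show ?case using G0[OF X(1)] G1[OF X] by simp
  next
    case (Suc k)
    have "G (k+2) X = G k X - 2 / X * G (Suc k) X" using G_rec[OF X, of k] by simp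
    also have "\<dots> = (gfun X)^k * (1 - 2 / X * gfun X)" using Suc.IH by (simp add: algebra_simps)
    also have "\<dots> = (gfun X)^(k+2)" using gfun_eq[OF X(2)] by (simp add: power_add power2_eq_square)
    finally show ?case using Suc.IH by simp
  qed
  then show ?thesis by simp
qed



definition Pk :: "nat \<Rightarrow> nat \<Rightarrow> real \<Rightarrow> real" where
  "Pk M k X = (\<Sum>j<M. if k + 2*j < M then tc k j * X^(k + 2*j) else 0)"

lemma Pk_sums: "(\<lambda>j. if k + 2*j < M then tc k j * X^(k + 2*j) else 0) sums Pk M k X"
  unfolding Pk_def by (rule sums_finite) auto

lemma Pk_zero: "k \<ge> M \<Longrightarrow> Pk M k X = 0"
  unfolding Pk_def by (intro sum.neutral) auto

lemma R_bound:
  assumes X: "0 < X" "X \<le> 1/2" and M: "M \<ge> 1"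
  shows "\<bar>G k X - Pk M k X\<bar> \<le> 2/3 * X^M"
proof -
  have aX: "\<bar>X\<bar> < 1" using X by simp
  define t where "t j = (if k + 2*j < M then 0 else tc k j * X^(k + 2*j))" for j
  have ts: "t sums (G k X - Pk M k X)"
  proof -
    have "(\<lambda>j. tc k j * X^(k + 2*j) - (if k + 2*j < M then tc k j * X^(k + 2*j) else 0)) sums (G k X - Pk M k X)"
      by (rule sums_diff[OF G_sums[OF aX] Pk_sums])
    moreover have "(\<lambda>j. tc k j * X^(k + 2*j) - (if k + 2*j < M then tc k j * X^(k + 2*j) else 0)) = t"
      by (auto simp: t_def)
    ultimately show ?thesis by simp
  qed
  define j0 where "j0 = (M - k + 1) div 2"
  have j0iff: "k + 2*j < M \<longleftrightarrow> j < j0" for j unfolding j0_def by presburger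
  have j0M: "k + 2*j0 \<ge> M" unfolding j0_def by presburger
  define f where "f j = (if j < j0 then 0 else 1/2 * X^(k + 2*j))" for j
  define C where "C = 1/2 * X^(k + 2*j0) / (1 - X^2)"
  have fs: "f sums C"
  proof -
    have X2: "norm (X^2) < 1" using aX by (simp add: abs_square_less_1)
    have "(\<lambda>i. 1/2 * X^(k + 2*j0) * (X^2)^i) sums (1/2 * X^(k + 2*j0) * (1 / (1 - X^2)))"
      by (rule sums_mult[OF geometric_sums[OF X2]])
    moreover have "(\<lambda>i. f (i + j0)) = (\<lambda>i. 1/2 * X^(k + 2*j0) * (X^2)^i)"
      by (auto simp: f_def power_add power_mult[symmetric] algebra_simps)
    ultimately have "(\<lambda>i. f (i + j0)) sums C" by (simp add: C_def)
    moreover have "(\<Sum>i<j0. f i) = 0" by (simp add: f_def)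
    ultimately show ?thesis by (simp add: sums_iff_shift)
  qed
  have tf: "\<bar>t j\<bar> \<le> f j" for j
  proof (cases "k + 2*j < M")
    case True then show ?thesis using j0iff by (simp add: t_def f_def)
  next
    case False
    then have "\<bar>tc k j\<bar> \<le> 1/2" using M False by (intro tc_abs_half) linarith
    then have "\<bar>tc k j\<bar> * X^(k + 2*j) \<le> 1/2 * X^(k + 2*j)"
      using X by (intro mult_right_mono) auto
    then show ?thesis using False j0iff[of j] X by (simp add: t_def f_def abs_mult)
  qed
  have "G k X - Pk M k X \<le> C"
    by (rule sums_le[OF _ ts fs]) (rule abs_le_D1[OF tf])
  moreover have "-(G k X - Pk M k X) \<le> C"
    by (rule sums_le[OF _ sums_minus[OF ts] fs]) (rule abs_le_D2[OF tf])
  moreover have "C \<le> 2/3 * X^M"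
  proof -
    have "X^(k + 2*j0) \<le> X^M" using X j0M by (intro power_decreasing) auto
    moreover have "1 / (1 - X^2) \<le> 4/3"
    proof -
      have "X^2 \<le> (1/2)^2" using X by (intro power_mono) auto
      then show ?thesis by (simp add: field_simps)
    qed
    moreover have "X^(k + 2*j0) \<ge> 0" using X by simp
    moreover have "X^2 < 1" using aX by (simp add: abs_square_less_1)
    ultimately have "X^(k + 2*j0) * (1 / (1 - X^2)) \<le> X^M * (4/3)"
      by (intro mult_mono) auto
    moreover have "C = 1/2 * (X^(k + 2*j0) * (1 / (1 - X^2)))" by (simp add: C_def)
    ultimately show ?thesis by linarith
  qed
  ultimately show ?thesis by linarith
qed


lemma main_bound:
  assumes X: "0 < X" "X \<le> 1/2" and M: "M \<ge> 1" and b: "b \<ge> 0"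
  shows "\<bar>exp (b * gfun X) - (\<Sum>k<M. b^k / fact k * Pk M k X)\<bar> \<le> 2/3 * X^M * exp b"
proof -
  have aX: "\<bar>X\<bar> < 1" "X \<noteq> 0" using X by auto
  have e: "(\<lambda>k. b^k / fact k * G k X) sums exp (b * gfun X)"
  proof -
    have "(\<lambda>k. (b * gfun X)^k /\<^sub>R fact k) sums exp (b * gfun X)" by (rule exp_converges)
    moreover have "(\<lambda>k. (b * gfun X)^k /\<^sub>R fact k) = (\<lambda>k. b^k / fact k * G k X)"
      using G_pow[OF aX] by (auto simp: power_mult_distrib divide_inverse_commute)
    ultimately show ?thesis by simp
  qed
  have p: "(\<lambda>k. b^k / fact k * Pk M k X) sums (\<Sum>k<M. b^k / fact k * Pk M k X)"
    by (rule sums_finite) (auto simp: Pk_zero)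
  have rs: "(\<lambda>k. b^k / fact k * (G k X - Pk M k X)) sums (exp (b * gfun X) - (\<Sum>k<M. b^k / fact k * Pk M k X))"
    using sums_diff[OF e p] by (simp add: algebra_simps)
  have bs: "(\<lambda>k. b^k / fact k * (2/3 * X^M)) sums (exp b * (2/3 * X^M))"
  proof -
    have "(\<lambda>k. b^k /\<^sub>R fact k) sums exp b" by (rule exp_converges)
    then have "(\<lambda>k. b^k / fact k) sums exp b" by (simp add: divide_inverse_commute)
    then show ?thesis by (rule sums_mult2)
  qed
  have pt: "\<bar>b^k / fact k * (G k X - Pk M k X)\<bar> \<le> b^k / fact k * (2/3 * X^M)" for k
  proof -
    have "\<bar>b^k / fact k * (G k X - Pk M k X)\<bar> = b^k / fact k * \<bar>G k X - Pk M k X\<bar>"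
      using b by (simp add: abs_mult)
    also have "\<dots> \<le> b^k / fact k * (2/3 * X^M)"
      using b by (intro mult_left_mono R_bound X M) auto
    finally show ?thesis .
  qed
  have "exp (b * gfun X) - (\<Sum>k<M. b^k / fact k * Pk M k X) \<le> exp b * (2/3 * X^M)"
    by (rule sums_le[OF _ rs bs]) (rule abs_le_D1[OF pt])
  moreover have "-(exp (b * gfun X) - (\<Sum>k<M. b^k / fact k * Pk M k X)) \<le> exp b * (2/3 * X^M)"
    by (rule sums_le[OF _ sums_minus[OF rs] bs]) (rule abs_le_D2[OF pt])
  ultimately have "\<bar>exp (b * gfun X) - (\<Sum>k<M. b^k / fact k * Pk M k X)\<bar> \<le> exp b * (2/3 * X^M)"
    by (rule abs_leI)
  then show ?thesis by (simp add: mult_ac)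
qed



definition TT :: "real \<Rightarrow> real \<Rightarrow> nat \<Rightarrow> nat \<Rightarrow> real" where
  "TT b X k j = b^k / fact k * (tc k j * X^(k + 2*j))"

lemma sum_Pk_regroup:
  "(\<Sum>k<M. b^k / fact k * Pk M k X) = (\<Sum>m<M. \<Sum>k<M. \<Sum>j<M. if k + 2*j = m then TT b X k j else 0)"
proof -
  have "(\<Sum>k<M. b^k / fact k * Pk M k X) = (\<Sum>k<M. \<Sum>j<M. if k + 2*j < M then TT b X k j else 0)"
    unfolding Pk_def TT_def by (simp add: sum_distrib_left if_distrib cong: if_cong)
  also have "\<dots> = (\<Sum>k<M. \<Sum>j<M. \<Sum>m<M. if k + 2*j = m then TT b X k j else 0)"
  proof (intro sum.cong refl)
    fix k j
    show "(if k + 2*j < M then TT b X k j else 0) = (\<Sum>m<M. if k + 2*j = m then TT b X k j else 0)"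
      by (simp add: sum.delta)
  qed
  also have "\<dots> = (\<Sum>k<M. \<Sum>m<M. \<Sum>j<M. if k + 2*j = m then TT b X k j else 0)"
    by (intro sum.cong refl sum.swap)
  also have "\<dots> = (\<Sum>m<M. \<Sum>k<M. \<Sum>j<M. if k + 2*j = m then TT b X k j else 0)"
    by (rule sum.swap)
  finally show ?thesis .
qed

lemma inner_sum:
  fixes m M k :: nat
  assumes "m < M"
  shows "(\<Sum>j<M. if k + 2*j = m then TT b X k j else 0) =
         (if k \<le> m \<and> even (m - k) then TT b X k ((m - k) div 2) else 0)"
proof -
  have iff: "(k + 2*j = m) \<longleftrightarrow> (j = (m - k) div 2 \<and> (k \<le> m \<and> even (m - k)))" for j
    by presburger
  show ?thesis
  proof (cases "k \<le> m \<and> even (m - k)")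
    case True
    have "(\<Sum>j<M. if k + 2*j = m then TT b X k j else 0) = (\<Sum>j<M. if j = (m - k) div 2 then TT b X k j else 0)"
      by (intro sum.cong refl) (use iff True in auto)
    also have "\<dots> = TT b X k ((m - k) div 2)"
    proof -
      have "(m - k) div 2 \<le> m - k" by (rule div_le_dividend)
      then have "(m - k) div 2 < M" using assms by linarith
      then show ?thesis by simp
    qed
    finally have "(\<Sum>j<M. if k + 2*j = m then TT b X k j else 0) = TT b X k ((m - k) div 2)" .
    then show ?thesis by (simp only: if_P[OF True])
  next
    case False
    then show ?thesis using iff by (intro trans[OF sum.neutral]) auto
  qed
qed

lemma outer_even:
  fixes p M :: nat and H :: "nat \<Rightarrow> real"
  assumes "2*p < M"
  shows "(\<Sum>k<M. if k \<le> 2*p \<and> even (2*p - k) then H k else 0) = (\<Sum>i\<le>p. H (2*i))"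
proof -
  have "(\<Sum>k<M. if k \<le> 2*p \<and> even (2*p - k) then H k else 0) =
        (\<Sum>k\<in>{k\<in>{..<M}. k \<le> 2*p \<and> even (2*p - k)}. H k)"
    by (simp add: sum.inter_filter[symmetric])
  also have "{k\<in>{..<M}. k \<le> 2*p \<and> even (2*p - k)} = (\<lambda>i. 2*i) ` {..p}"
  proof (intro set_eqI iffI)
    fix k assume "k \<in> {k\<in>{..<M}. k \<le> 2*p \<and> even (2*p - k)}"
    then have "k \<le> 2*p" "even k" by (auto simp: even_diff_nat)
    then show "k \<in> (\<lambda>i. 2*i) ` {..p}" by (auto elim!: evenE)
  next
    fix k assume "k \<in> (\<lambda>i. 2*i) ` {..p}"
    then show "k \<in> {k\<in>{..<M}. k \<le> 2*p \<and> even (2*p - k)}" using assms by auto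
  qed
  also have "(\<Sum>k\<in>(\<lambda>i. 2*i) ` {..p}. H k) = (\<Sum>i\<le>p. H (2*i))"
    by (subst sum.reindex) (auto simp: inj_on_def)
  finally show ?thesis .
qed

lemma outer_odd:
  fixes p M :: nat and H :: "nat \<Rightarrow> real"
  assumes "2*p+1 < M"
  shows "(\<Sum>k<M. if k \<le> 2*p+1 \<and> even (2*p+1 - k) then H k else 0) = (\<Sum>i\<le>p. H (2*i+1))"
proof -
  have "(\<Sum>k<M. if k \<le> 2*p+1 \<and> even (2*p+1 - k) then H k else 0) =
        (\<Sum>k\<in>{k\<in>{..<M}. k \<le> 2*p+1 \<and> even (2*p+1 - k)}. H k)"
    by (simp add: sum.inter_filter[symmetric])
  also have "{k\<in>{..<M}. k \<le> 2*p+1 \<and> even (2*p+1 - k)} = (\<lambda>i. 2*i+1) ` {..p}"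
  proof (intro set_eqI iffI)
    fix k assume "k \<in> {k\<in>{..<M}. k \<le> 2*p+1 \<and> even (2*p+1 - k)}"
    then have "k \<le> 2*p+1" "odd k" by (auto simp: even_diff_nat)
    then show "k \<in> (\<lambda>i. 2*i+1) ` {..p}" by (auto elim!: oddE)
  next
    fix k assume "k \<in> (\<lambda>i. 2*i+1) ` {..p}"
    then show "k \<in> {k\<in>{..<M}. k \<le> 2*p+1 \<and> even (2*p+1 - k)}" using assms by auto
  qed
  also have "(\<Sum>k\<in>(\<lambda>i. 2*i+1) ` {..p}. H k) = (\<Sum>i\<le>p. H (2*i+1))"
    by (subst sum.reindex) (auto simp: inj_on_def)
  finally show ?thesis .
qed


lemma even_term:
  fixes s n b X :: real and v p :: nat
  assumes b2: "b^2 = 4*pi^2* s/3" and X2: "X^2 = s/n" and n: "n > 0" and v: "1 \<le> v" "v \<le> p"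
  shows "TT b X (2* v) (p-v) = (s^p * fact(2*p-1) / (-4)^p) *
           ((-4*pi^2* s/3)^v / (fact(2* v-1) * fact(v+p) * fact(p-v))) / n^p"
proof -
  obtain q where q: "p = v + q" using v by (metis le_add_diff_inverse)
  have qq: "p - v = q" using q by simp
  have k: "2* v + 2*(p-v) = 2*p" using v by simp
  have bin: "real ((2*p) choose q) = fact (2*p) / (fact q * fact (v+p))"
  proof -
    have "real ((2*p) choose q) = fact (2*p) / (fact q * fact (2*p - q))"
      by (rule binomial_fact) (simp add: q)
    moreover have "2*p - q = v + p" using q by simp
    ultimately show ?thesis by simp
  qed
  have ca: "ca (2* v) (p-v) = real (2* v) / real (2*p) * (fact (2*p) / (fact q * fact (v+p)))"
  proof -
    have k': "2 * v + 2 * q = 2 * p" using q by simp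
    have "ca (2 * v) q = real (2 * v) / real (2 * v + 2 * q) * real ((2 * v + 2 * q) choose q)"
      by (rule ca_alt) (use v in simp)
    then show ?thesis unfolding k' bin qq .
  qed
  have f1: "(fact (2* v)::real) = real (2* v) * fact (2* v-1)" using v by (simp add: fact_reduce)
  have f2: "(fact (2*p)::real) = real (2*p) * fact (2*p-1)" using v by (simp add: fact_reduce)
  have bp: "b^(2* v) = (4*pi^2* s/3)^v" by (simp add: power_mult b2[symmetric])
  have Xp: "X^(2* v + 2*(p-v)) = (s/n)^p" unfolding k by (simp add: power_mult X2[symmetric])
  have e1: "(-1::real)^v * (-1)^v = 1" by (simp add: power_add[symmetric])
  have sg: "(-1::real)^(p-v) = (-1)^p * (-1)^v" unfolding qq q power_add using e1 by (simp add: algebra_simps)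
  have m4: "(-4::real)^p = (-1)^p * 4^p" by (simp add: power_mult_distrib[symmetric])
  have m5: "(-4*pi^2* s/3::real)^v = (-1)^v * (4*pi^2* s/3)^v" by (simp add: power_mult_distrib[symmetric])
  have m6: "(2::real)^(2* v + 2*(p-v)) = 4^p" unfolding k by (simp add: power_mult)
  have p0: "real (2* v) \<noteq> 0" "real (2*p) \<noteq> 0" using v by auto
  have e2: "(-1::real)^p * (-1)^p = 1" by (simp add: power_add[symmetric])
  show ?thesis
    unfolding TT_def tc_def ca f1 f2 bp Xp sg m4 m5 m6 qq[symmetric]
    using p0 n e1 e2 by (simp add: field_simps)
qed


lemma rearr: fixes A b F c D S X :: real
  shows "A * b / F * (c / D * (S * X)) = A / F * (c / D * S) * (b * X)"
  by (simp add: divide_inverse mult_ac)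

lemma odd_generic:
  fixes Bv b a F2v sq d F2p Fq Fv1 c4 s n X sp sv t r :: real and p :: nat
  assumes nz: "a \<noteq> 0" "d \<noteq> 0" "F2v \<noteq> 0" "Fq \<noteq> 0" "Fv1 \<noteq> 0" "c4 \<noteq> 0" "n > 0" "t \<noteq> 0" "r \<noteq> 0" "sp \<noteq> 0"
    and sq: "sq = sv / sp" and bX: "b * X = 2 * pi * s / (t * r)"
  shows "Bv * b / (a * F2v) * (sq * (a / d * (d * F2p / (Fq * Fv1))) / (2 * c4) * ((s / n)^p * X)) =
         (pi * (s^p * s) * F2p / (t * (sp * c4))) * ((sv * Bv) / (F2v * Fq * Fv1)) / (n^p * r)"
proof -
  have "Bv * b / (a * F2v) * (sq * (a / d * (d * F2p / (Fq * Fv1))) / (2 * c4) * ((s / n)^p * X)) =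
        Bv * sq * F2p / (F2v * Fq * Fv1 * 2 * c4) * (s^p / n^p) * (b * X)"
    using nz by (simp add: field_simps power_divide)
  also have "\<dots> = (pi * (s^p * s) * F2p / (t * (sp * c4))) * ((sv * Bv) / (F2v * Fq * Fv1)) / (n^p * r)"
    unfolding bX sq using nz by (simp add: field_simps)
  finally show ?thesis .
qed

lemma odd_term:
  fixes s n b X :: real and v p :: nat
  assumes b2: "b^2 = 4 * pi^2 * s / 3" and X2: "X^2 = s / n" and bX: "b * X = 2 * pi * s / (sqrt 3 * sqrt n)"
    and n: "n > 0" and v: "v \<le> p"
  shows "TT b X (2 * v + 1) (p - v) = (pi * s^(p+1) * fact (2 * p) / (sqrt 3 * (-4)^p)) *
           ((-4 * pi^2 * s / 3)^v / (fact (2 * v) * fact (p - v) * fact (v + p + 1))) / (n^p * sqrt n)"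
proof -
  obtain q where q: "p = v + q" using v by (metis le_add_diff_inverse)
  have qq: "p - v = q" using q by simp
  define a where "a = real (2 * v + 1)"
  define d where "d = real (2 * p + 1)"
  define F2v where "F2v = (fact (2 * v) :: real)"
  define F2p where "F2p = (fact (2 * p) :: real)"
  define Fq where "Fq = (fact (p - v) :: real)"
  define Fv1 where "Fv1 = (fact (v + p + 1) :: real)"
  define Bv where "Bv = (4 * pi^2 * s / 3)^v"
  define sq where "sq = (-1::real)^(p - v)"
  define sp where "sp = (-1::real)^p"
  define sv where "sv = (-1::real)^v"
  define c4 where "c4 = (4::real)^p"
  have bin: "real ((2 * p + 1) choose (p - v)) = d * F2p / (Fq * Fv1)"
  proof -
    have "real ((2 * p + 1) choose (p - v)) = fact (2 * p + 1) / (fact (p - v) * fact (2 * p + 1 - (p - v)))"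
      by (rule binomial_fact) (simp add: q)
    moreover have "2 * p + 1 - (p - v) = v + p + 1" using q by simp
    moreover have "(fact (2 * p + 1) :: real) = d * F2p" unfolding d_def F2p_def by simp
    ultimately show ?thesis unfolding Fq_def Fv1_def by (simp add: ac_simps)
  qed
  have ca: "ca (2 * v + 1) (p - v) = a / d * (d * F2p / (Fq * Fv1))"
  proof -
    have k': "2 * v + 1 + 2 * (p - v) = 2 * p + 1" using q by simp
    have "ca (2 * v + 1) (p - v) = real (2 * v + 1) / real (2 * v + 1 + 2 * (p - v)) * real ((2 * v + 1 + 2 * (p - v)) choose (p - v))"
      by (rule ca_alt) simp
    then show ?thesis unfolding k' bin a_def d_def .
  qed
  have fa: "(fact (2 * v + 1)::real) = a * F2v" unfolding a_def F2v_def by simp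
  have bp: "b^(2 * v + 1) = Bv * b" unfolding Bv_def by (simp add: power_mult b2[symmetric])
  have Xp: "X^(2 * v + 1 + 2 * (p - v)) = (s / n)^p * X"
  proof -
    have "2 * v + 1 + 2 * (p - v) = Suc (2 * p)" using v by simp
    then show ?thesis by (simp add: power_mult X2[symmetric])
  qed
  have m6: "(2::real)^(2 * v + 1 + 2 * (p - v)) = 2 * c4"
  proof -
    have "2 * v + 1 + 2 * (p - v) = Suc (2 * p)" using v by simp
    then show ?thesis unfolding c4_def by (simp add: power_mult)
  qed
  have e1: "(-1::real)^v * (-1)^v = 1" by (simp add: power_add[symmetric])
  have e2: "(-1::real)^p * (-1)^p = 1" by (simp add: power_add[symmetric])
  have sgn: "sq = sv / sp"
  proof -
    have "sq * sp = sv" unfolding sq_def sp_def sv_def qq q power_add using e1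
      by (simp add: algebra_simps)
    moreover have "sp \<noteq> 0" unfolding sp_def by simp
    ultimately show ?thesis by (simp add: field_simps)
  qed
  have m4: "(-4::real)^p = sp * c4" unfolding sp_def c4_def by (simp add: power_mult_distrib[symmetric])
  have m5: "(-4 * pi^2 * s / 3::real)^v = sv * Bv" unfolding sv_def Bv_def by (simp add: power_mult_distrib[symmetric])
  have sp1: "s^(p+1) = s^p * s" by simp
  have "TT b X (2 * v + 1) (p - v) = Bv * b / (a * F2v) * (sq * (a / d * (d * F2p / (Fq * Fv1))) / (2 * c4) * ((s / n)^p * X))"
    unfolding TT_def tc_def bp Xp fa ca m6 sq_def ..
  also have "\<dots> = (pi * (s^p * s) * F2p / (sqrt 3 * (sp * c4))) * ((sv * Bv) / (F2v * Fq * Fv1)) / (n^p * sqrt n)"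
    by (rule odd_generic[OF _ _ _ _ _ _ n _ _ _ sgn bX]) (use n in \<open>auto simp: a_def d_def F2v_def Fq_def Fv1_def c4_def sp_def\<close>)
  also have "\<dots> = (pi * s^(p+1) * fact (2 * p) / (sqrt 3 * (-4)^p)) *
           ((-4 * pi^2 * s / 3)^v / (fact (2 * v) * fact (p - v) * fact (v + p + 1))) / (n^p * sqrt n)"
    unfolding m4 m5 sp1 F2p_def F2v_def Fq_def Fv1_def ..
  finally show ?thesis .
qed


lemma d1_term:
  fixes s :: nat and n b X :: real and m M :: nat
  assumes b2: "b^2 = 4 * pi^2 * real s / 3" and X2: "X^2 = real s / n" and bX: "b * X = 2 * pi * real s / (sqrt 3 * sqrt n)"
    and n: "n > 0" and m: "m < M"
  shows "(\<Sum>k<M. \<Sum>j<M. if k + 2*j = m then TT b X k j else 0) = d1 s m / n powr (real m / 2)"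
proof -
  have "(\<Sum>k<M. \<Sum>j<M. if k + 2*j = m then TT b X k j else 0) =
        (\<Sum>k<M. if k \<le> m \<and> even (m - k) then TT b X k ((m - k) div 2) else 0)"
    by (intro sum.cong refl inner_sum m)
  also have "\<dots> = d1 s m / n powr (real m / 2)"
  proof (cases "even m")
    case True
    then obtain p where p: "m = 2 * p" by (auto elim!: evenE)
    have "(\<Sum>k<M. if k \<le> m \<and> even (m - k) then TT b X k ((m - k) div 2) else 0) =
          (\<Sum>i\<le>p. TT b X (2 * i) ((2 * p - 2 * i) div 2))"
      unfolding p by (rule outer_even) (use m p in simp)
    also have "\<dots> = (\<Sum>i\<le>p. TT b X (2 * i) (p - i))"
      by (intro sum.cong refl) (simp add: diff_mult_distrib2[symmetric])
    also have "\<dots> = e1 s p / n^p"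
    proof (cases "p = 0")
      case True
      then show ?thesis by (simp add: TT_def tc_def e1_def)
    next
      case False
      have "(\<Sum>i\<le>p. TT b X (2 * i) (p - i)) = TT b X 0 p + (\<Sum>i=1..p. TT b X (2 * i) (p - i))"
        by (simp add: atMost_atLeast0 sum.atLeast_Suc_atMost)
      also have "TT b X 0 p = 0" using False by (simp add: TT_def tc_def ca_def)
      also have "(\<Sum>i=1..p. TT b X (2 * i) (p - i)) =
         (\<Sum>i=1..p. (real s^p * fact(2*p-1) / (-4)^p) *
           ((-4 * pi^2 * real s / 3)^i / (fact(2*i-1) * fact(i+p) * fact(p-i))) / n^p)"
        by (intro sum.cong refl even_term[OF b2 X2 n]) auto
      also have "\<dots> = e1 s p / n^p"
        using False by (simp add: e1_def sum_distrib_left sum_divide_distrib)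
      finally show ?thesis by simp
    qed
    also have "n^p = n powr (real m / 2)"
      using n by (simp add: p powr_realpow)
    also have "e1 s p = d1 s m" by (simp add: d1_def p)
    finally show ?thesis .
  next
    case False
    then obtain p where p: "m = 2 * p + 1" by (auto elim!: oddE)
    have "(\<Sum>k<M. if k \<le> m \<and> even (m - k) then TT b X k ((m - k) div 2) else 0) =
          (\<Sum>i\<le>p. TT b X (2 * i + 1) ((2 * p + 1 - (2 * i + 1)) div 2))"
      unfolding p by (rule outer_odd) (use m p in simp)
    also have "\<dots> = (\<Sum>i\<le>p. TT b X (2 * i + 1) (p - i))"
      by (intro sum.cong refl) (simp add: diff_mult_distrib2[symmetric])
    also have "\<dots> = (\<Sum>i\<le>p. (pi * real s^(p+1) * fact (2 * p) / (sqrt 3 * (-4)^p)) *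
           ((-4 * pi^2 * real s / 3)^i / (fact (2 * i) * fact (p - i) * fact (i + p + 1))) / (n^p * sqrt n))"
      by (intro sum.cong refl odd_term[OF b2 X2 bX n]) auto
    also have "\<dots> = o1 s p / (n^p * sqrt n)"
      by (simp add: o1_def sum_distrib_left sum_divide_distrib atMost_atLeast0)
    also have "n^p * sqrt n = n powr (real m / 2)"
    proof -
      have "real m / 2 = real p + 1/2" by (simp add: p)
      then have "n powr (real m / 2) = n powr (real p) * n powr (1/2)" by (simp only: powr_add)
      then show ?thesis using n by (simp add: powr_realpow powr_half_sqrt)
    qed
    also have "o1 s p = d1 s m" by (simp add: d1_def p)
    finally show ?thesis .
  qed
  finally show ?thesis .
qed



theorem lemma5p1:
  fixes N s n :: nat
  assumes "N \<ge> 3" and "s \<ge> 1" and "real n \<ge> 4 * real s ^ 2"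
  shows "\<exists>E::real.
    \<bar>E\<bar> \<le> 1.5 * real s powr ((real N + 3) / 2) * cosh (2 * pi * sqrt (real s / 3))
                * real n powr (- ((real N + 2) / 2)) \<and>
    exp (2 * pi * sqrt ((real n + real s) / 3)) =
      exp (2 * pi * sqrt (real n / 3)) *
        ((\<Sum>m=0..N+1. d1 s m / real n powr (real m / 2)) + E)"
proof -
  define M where "M = N + 2"
  define rs where "rs = real s"
  define rn where "rn = real n"
  have rs1: "rs \<ge> 1" using assms(2) by (simp add: rs_def)
  have rn4: "rn \<ge> 4 * rs^2" using assms(3) by (simp add: rs_def rn_def)
  have rs2: "rs^2 \<ge> rs" using rs1 by (simp add: power2_eq_square)
  have rnpos: "rn > 0" using rn4 rs1 rs2 by linarith
  define X where "X = sqrt rs / sqrt rn"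
  define b where "b = 2 * pi * sqrt (rs / 3)"
  have Xpos: "X > 0" using rs1 rnpos by (simp add: X_def)
  have X2: "X^2 = rs / rn" using rs1 rnpos by (simp add: X_def power_divide)
  have Xhalf: "X \<le> 1/2"
  proof -
    have "rs / rn \<le> rs / (4 * rs^2)" using rs1 rnpos rn4 by (intro divide_left_mono) auto
    also have "\<dots> = 1 / (4 * rs)" using rs1 by (simp add: power2_eq_square)
    also have "\<dots> \<le> 1/4" using rs1 by (simp add: field_simps)
    finally have "X^2 \<le> (1/2)^2" using X2 by (simp add: power2_eq_square)
    then show ?thesis using Xpos by (simp add: power_le_imp_le_base[of X 1 "1/2"])
  qed
  have b0: "b \<ge> 0" using rs1 by (simp add: b_def)
  have b2: "b^2 = 4 * pi^2 * rs / 3" using rs1 by (simp add: b_def power_mult_distrib)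
  have bX: "b * X = 2 * pi * rs / (sqrt 3 * sqrt rn)"
    using rs1 by (simp add: b_def X_def real_sqrt_divide)
  have ratio: "b * gfun X = 2 * pi * sqrt ((rn + rs) / 3) - 2 * pi * sqrt (rn / 3)"
  proof -
    have "1 + X^2 = (rn + rs) / rn" using X2 rnpos by (simp add: field_simps)
    then have "sqrt (1 + X^2) = sqrt (rn + rs) / sqrt rn" by (simp add: real_sqrt_divide)
    then have "gfun X = (sqrt (rn + rs) - sqrt rn) / sqrt rs"
      unfolding gfun_def X_def using rnpos rs1 by (simp add: field_simps)
    then have g: "gfun X * sqrt rs = sqrt (rn + rs) - sqrt rn" using rs1 by simp
    have "b * gfun X = 2 * pi / sqrt 3 * (gfun X * sqrt rs)"
      unfolding b_def real_sqrt_divide by (simp add: field_simps)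
    also have "\<dots> = 2 * pi * (sqrt (rn + rs) / sqrt 3) - 2 * pi * (sqrt rn / sqrt 3)"
      unfolding g by (simp add: field_simps)
    finally show ?thesis by (simp add: real_sqrt_divide)
  qed
  define S where "S = (\<Sum>k<M. b^k / fact k * Pk M k X)"
  have Seq: "S = (\<Sum>m=0..N+1. d1 s m / real n powr (real m / 2))"
  proof -
    have "S = (\<Sum>m<M. \<Sum>k<M. \<Sum>j<M. if k + 2*j = m then TT b X k j else 0)"
      unfolding S_def by (rule sum_Pk_regroup)
    also have "\<dots> = (\<Sum>m<M. d1 s m / rn powr (real m / 2))"
      by (intro sum.cong refl d1_term[OF b2[unfolded rs_def] X2[unfolded rs_def] bX[unfolded rs_def] rnpos]) auto
    also have "{..<M} = {0..N+1}" unfolding M_def by auto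
    finally show ?thesis by (simp add: rn_def)
  qed
  define E where "E = exp (b * gfun X) - S"
  have Eb: "\<bar>E\<bar> \<le> 2/3 * X^M * exp b"
    unfolding E_def S_def by (rule main_bound[OF Xpos Xhalf _ b0]) (simp add: M_def)
  have XM: "X^M = rs powr (real M / 2) * rn powr (- (real M / 2))"
  proof -
    have "sqrt rs ^ M = rs powr (real M / 2)"
      using rs1 by (simp add: powr_half_sqrt[symmetric] powr_realpow[symmetric] powr_powr)
    moreover have "sqrt rn ^ M = rn powr (real M / 2)"
      using rnpos by (simp add: powr_half_sqrt[symmetric] powr_realpow[symmetric] powr_powr)
    ultimately show ?thesis unfolding X_def by (simp add: power_divide powr_minus_divide)
  qed
  have bound: "2/3 * X^M * exp b \<le> 1.5 * real s powr ((real N + 3) / 2) * cosh (2 * pi * sqrt (real s / 3))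
                * real n powr (- ((real N + 2) / 2))"
  proof -
    have c: "exp b \<le> 2 * cosh b" by (simp add: cosh_def)
    have sp: "rs powr (real M / 2) \<le> rs powr ((real N + 3) / 2)"
      using rs1 by (intro powr_mono) (auto simp: M_def)
    have "2/3 * X^M * exp b \<le> 2/3 * X^M * (2 * cosh b)"
      using c Xpos by (intro mult_left_mono) auto
    also have "\<dots> = 4/3 * rs powr (real M / 2) * cosh b * rn powr (- (real M / 2))"
      unfolding XM by simp
    also have "\<dots> \<le> 1.5 * rs powr ((real N + 3) / 2) * cosh b * rn powr (- (real M / 2))"
    proof -
      have "cosh b > 0" by (simp add: cosh_def add_pos_pos)
      moreover have "rn powr (- (real M / 2)) > 0" using rnpos by simp
      moreover have "rs powr (real M / 2) \<ge> 0" by simp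
      moreover have key: "4/3 * rs powr (real M / 2) \<le> 1.5 * rs powr ((real N + 3) / 2)"
        using sp powr_ge_zero[of rs "real M / 2"] by linarith
      ultimately show ?thesis
        by (intro mult_right_mono key) auto
    qed
    finally show ?thesis by (simp add: rs_def rn_def b_def M_def add.commute)
  qed
  show ?thesis
  proof (intro exI conjI)
    show "\<bar>E\<bar> \<le> 1.5 * real s powr ((real N + 3) / 2) * cosh (2 * pi * sqrt (real s / 3))
                * real n powr (- ((real N + 2) / 2))" using Eb bound by linarith
    have "exp (2 * pi * sqrt ((real n + real s) / 3)) = exp (2 * pi * sqrt (real n / 3)) * exp (b * gfun X)"
      unfolding ratio by (simp add: rs_def rn_def exp_diff)
    also have "exp (b * gfun X) = S + E" by (simp add: E_def)
    finally show "exp (2 * pi * sqrt ((real n + real s) / 3)) =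
      exp (2 * pi * sqrt (real n / 3)) * ((\<Sum>m=0..N+1. d1 s m / real n powr (real m / 2)) + E)"
      by (simp add: Seq)
  qed
qed


end
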